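(* Let $A\in\mathbb{R}^{n\times n}$, $B\in\mathbb{R}^{n\times m}$, $C\in\mathbb{R}^{p\times n}$, $D\in\mathbb{R}^{p\times p}$ with $(A,B)$ reachable, $(C,A)$ observable, $BB^T\succ0$, $DD^T\succ0$. Fix $c>0$ and a positive integer $N$. Let $P_0\in\mathcal{P}$ be arbitrary, $P_{t+1}=r^R_c(P_t)$ for $t\ge0$, and $P^d_k=P_{kN}$ for $k\ge0$ (the $N$-block, i.e. downsampled, iteration). Let $(\overline{P}_t)_{t\ge0}$ be defined by $\overline{P}_0=BB^T$, $\overline{P}_{t+1}=r(\overline{P}_t)$. Then for every integer $q\ge0$, $$P_t\succeq\overline{P}_q\quad\text{for all } t\ge q+1,\qquad\text{and}\qquad P^d_k\succeq \overline{P}_q\quad\text{for all } k\ge \Big\lceil \tfrac{q+1}{N}\Big\rceil.$$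
   Context: $\mathcal{P}$ denotes the cone of $n\times n$ real symmetric positive definite matrices; $\succeq$ is the Loewner order; $\lambda_1(P)$ is the largest eigenvalue of $P$. For $P\in\mathcal{P}$ and $\theta$ with $I-\theta P\succ0$, let $\gamma(\theta,P)=\tfrac12\big[\log\det(I-\theta P)+\mathrm{tr}((I-\theta P)^{-1})-n\big]$. For $c>0$ and $P\in\mathcal{P}$, $\theta_c(P)$ denotes the unique $\theta\in(0,\lambda_1(P)^{-1})$ with $\gamma(\theta,P)=c$ (its existence and uniqueness are taken as given). Define $r^R_c(P)=A[P^{-1}+C^T(DD^T)^{-1}C-\theta_c(P)I_n]^{-1}A^T+BB^T$ (the risk sensitive like Riccati map) and $r(P)=A[P^{-1}+C^T(DD^T)^{-1}C]^{-1}A^T+BB^T$ (the Riccati map). *)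

theory Defs
  imports "HOL-Analysis.Analysis"
begin

type_synonym 'n sqmat = "real^'n^'n"

fun mat_pow :: "real^'n^'n \<Rightarrow> nat \<Rightarrow> real^'n^'n" where
  "mat_pow A 0 = mat 1"
| "mat_pow A (Suc k) = A ** mat_pow A k"

definition pos_def :: "real^'n^'n \<Rightarrow> bool" where
  "pos_def P \<longleftrightarrow> transpose P = P \<and> (\<forall>x. x \<noteq> 0 \<longrightarrow> x \<bullet> (P *v x) > 0)"

definition loewner_ge :: "real^'n^'n \<Rightarrow> real^'n^'n \<Rightarrow> bool" where
  "loewner_ge P Q \<longleftrightarrow> (\<forall>x. x \<bullet> ((P - Q) *v x) \<ge> 0)"

definition reachable :: "real^'n^'n \<Rightarrow> real^'m^'n \<Rightarrow> bool" where
  "reachable A B \<longleftrightarrow>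
     span (\<Union>k<CARD('n). range (\<lambda>u. (mat_pow A k ** B) *v u)) = (UNIV :: (real^'n) set)"

definition observable :: "real^'n^'p \<Rightarrow> real^'n^'n \<Rightarrow> bool" where
  "observable C A \<longleftrightarrow>
     (\<forall>x::real^'n. (\<forall>k<CARD('n). (C ** mat_pow A k) *v x = 0) \<longrightarrow> x = 0)"

definition lambda1 :: "real^'n^'n \<Rightarrow> real" where
  "lambda1 P = Max {l. \<exists>v. v \<noteq> 0 \<and> P *v v = l *\<^sub>R v}"

definition gamma :: "real \<Rightarrow> real^'n^'n \<Rightarrow> real" where
  "gamma \<theta> P = (ln (det (mat 1 - \<theta> *\<^sub>R P)) + trace (matrix_inv (mat 1 - \<theta> *\<^sub>R P))
                  - real CARD('n)) / 2"

definition theta_c :: "real \<Rightarrow> real^'n^'n \<Rightarrow> real" where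
  "theta_c c P = (THE \<theta>. 0 < \<theta> \<and> \<theta> < inverse (lambda1 P) \<and> gamma \<theta> P = c)"

definition riccati_R :: "real \<Rightarrow> real^'n^'n \<Rightarrow> real^'m^'n \<Rightarrow> real^'n^'p \<Rightarrow> real^'p^'p
    \<Rightarrow> real^'n^'n \<Rightarrow> real^'n^'n" where
  "riccati_R c A B C D P =
     A ** matrix_inv (matrix_inv P + transpose C ** matrix_inv (D ** transpose D) ** C
                      - theta_c c P *\<^sub>R mat 1) ** transpose A + B ** transpose B"

definition riccati :: "real^'n^'n \<Rightarrow> real^'m^'n \<Rightarrow> real^'n^'p \<Rightarrow> real^'p^'p
    \<Rightarrow> real^'n^'n \<Rightarrow> real^'n^'n" where
  "riccati A B C D P =
     A ** matrix_inv (matrix_inv P + transpose C ** matrix_inv (D ** transpose D) ** C) ** transpose A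
     + B ** transpose B"

end

theory Submission imports Defs begin


definition psd :: "real^'n^'n \<Rightarrow> bool" where
  "psd M \<longleftrightarrow> transpose M = M \<and> (\<forall>x. 0 \<le> x \<bullet> (M *v x))"

lemma transpose_add: "transpose (X + Y) = transpose X + transpose (Y::real^'n^'m)"
  by (simp add: transpose_def vec_eq_iff)
lemma transpose_diff: "transpose (X - Y) = transpose X - transpose (Y::real^'n^'m)"
  by (simp add: transpose_def vec_eq_iff)

lemma inner_transpose: "x \<bullet> (M *v y) = (transpose M *v x) \<bullet> (y::real^'n)"
  for M :: "real^'n^'m"
  by (simp add: dot_lmul_matrix)

lemma inner_sym: "transpose M = M \<Longrightarrow> x \<bullet> (M *v y) = y \<bullet> (M *v (x::real^'n))"
  for M :: "real^'n^'n"
  by (metis inner_transpose inner_commute)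

lemma matrix_inv_props:
  fixes M :: "real^'n^'n"
  assumes "invertible M"
  shows "M ** matrix_inv M = mat 1" "matrix_inv M ** M = mat 1"
proof -
  have "\<exists>A'. M ** A' = mat 1 \<and> A' ** M = mat 1" using assms invertible_def by blast
  then have "M ** matrix_inv M = mat 1 \<and> matrix_inv M ** M = mat 1"
    unfolding matrix_inv_def by (rule someI_ex)
  then show "M ** matrix_inv M = mat 1" "matrix_inv M ** M = mat 1" by auto
qed

lemma matrix_inv_vec:
  fixes M :: "real^'n^'n"
  assumes "invertible M"
  shows "M *v (matrix_inv M *v y) = y" "matrix_inv M *v (M *v y) = y"
  using matrix_inv_props[OF assms] by (simp_all add: matrix_vector_mul_assoc)

lemma pd_invertible:
  fixes P :: "real^'n^'n"
  assumes "pos_def P" shows "invertible P"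
proof -
  have "\<forall>x. P *v x = 0 \<longrightarrow> x = 0"
    using assms unfolding pos_def_def by (metis inner_zero_right less_irrefl)
  then show ?thesis using matrix_left_invertible_ker invertible_left_inverse by blast
qed

lemma inv_sym:
  fixes P :: "real^'n^'n"
  assumes "invertible P" "transpose P = P"
  shows "transpose (matrix_inv P) = matrix_inv P"
proof -
  have "transpose (matrix_inv P) ** P = mat 1"
    by (metis assms matrix_inv_props(1) matrix_transpose_mul transpose_mat)
  then have "transpose (matrix_inv P) = transpose (matrix_inv P) ** (P ** matrix_inv P)"
    using matrix_inv_props(1)[OF assms(1)] by simp
  also have "\<dots> = matrix_inv P"
    by (simp add: matrix_mul_assoc \<open>transpose (matrix_inv P) ** P = mat 1\<close>)
  finally show ?thesis .
qed

lemma pd_inv: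
  fixes P :: "real^'n^'n"
  assumes "pos_def P" shows "pos_def (matrix_inv P)"
proof -
  have inv: "invertible P" using pd_invertible assms by blast
  have sym: "transpose P = P" using assms pos_def_def by blast
  have "y \<bullet> (matrix_inv P *v y) > 0" if "y \<noteq> 0" for y
  proof -
    define x where "x = matrix_inv P *v y"
    have y: "y = P *v x" unfolding x_def using matrix_inv_vec[OF inv] by simp
    have "x \<noteq> 0" using y that by auto
    then have "x \<bullet> (P *v x) > 0" using assms pos_def_def by blast
    then show ?thesis unfolding y using matrix_inv_vec(2)[OF inv] by (simp add: inner_commute)
  qed
  then show ?thesis unfolding pos_def_def using inv_sym[OF inv sym] by blast
qed

lemma pd_psd: "pos_def P \<Longrightarrow> psd P"
  unfolding pos_def_def psd_def by (metis inner_zero_left matrix_vector_mult_0_right order_less_imp_le order_refl)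

lemma pd_add_psd: "pos_def P \<Longrightarrow> psd K \<Longrightarrow> pos_def (P + K)"
  unfolding pos_def_def psd_def
  by (simp add: transpose_add matrix_vector_mult_add_rdistrib inner_add_right add_pos_nonneg)

lemma psd_add: "psd P \<Longrightarrow> psd K \<Longrightarrow> psd (P + K)"
  unfolding psd_def
  by (simp add: transpose_add matrix_vector_mult_add_rdistrib inner_add_right)

lemma congr_vec: "(A ** X ** transpose A) *v x = A *v (X *v (transpose A *v x))"
  for A :: "real^'n^'m" and X :: "real^'n^'n"
  by (metis matrix_vector_mul_assoc)

lemma psd_congr:
  fixes A :: "real^'n^'m" and X :: "real^'n^'n"
  assumes "psd X" shows "psd (A ** X ** transpose A)"
proof -
  have "transpose (A ** X ** transpose A) = A ** X ** transpose A"
    using assms unfolding psd_def by (simp add: matrix_transpose_mul matrix_mul_assoc)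
  moreover have "0 \<le> x \<bullet> ((A ** X ** transpose A) *v x)" for x
    unfolding congr_vec inner_transpose[of x A] using assms psd_def by (metis inner_commute)
  ultimately show ?thesis unfolding psd_def by blast
qed

lemma loewner_congr:
  fixes A :: "real^'n^'m" and X Y :: "real^'n^'n"
  assumes "loewner_ge X Y" shows "loewner_ge (A ** X ** transpose A) (A ** Y ** transpose A)"
proof -
  have "x \<bullet> ((A ** X ** transpose A - A ** Y ** transpose A) *v x) =
        (transpose A *v x) \<bullet> ((X - Y) *v (transpose A *v x))" for x
    by (simp add: matrix_vector_mult_diff_rdistrib congr_vec inner_transpose[of x A]
        matrix_vector_mult_diff_distrib inner_diff_right)
  then show ?thesis using assms unfolding loewner_ge_def by simp
qed

lemma loewner_add: "loewner_ge X Y \<Longrightarrow> loewner_ge (X + Z) (Y + Z)"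
  unfolding loewner_ge_def by simp

lemma loewner_trans: "loewner_ge X Y \<Longrightarrow> loewner_ge Y Z \<Longrightarrow> loewner_ge X (Z::real^'n^'n)"
proof -
  assume a: "loewner_ge X Y" "loewner_ge Y Z"
  have "x \<bullet> ((X - Z) *v x) = x \<bullet> ((X - Y) *v x) + x \<bullet> ((Y - Z) *v x)" for x
    by (simp add: matrix_vector_mult_diff_rdistrib inner_diff_right)
  then show ?thesis using a unfolding loewner_ge_def by (simp add: add_nonneg_nonneg)
qed

lemma loewner_psd: "psd K \<Longrightarrow> loewner_ge (X + K) X"
  unfolding loewner_ge_def psd_def by simp

lemma cauchy_schwarz_psd:
  fixes S :: "real^'n^'n"
  assumes "psd S"
  shows "(x \<bullet> (S *v y))^2 \<le> (x \<bullet> (S *v x)) * (y \<bullet> (S *v y))"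
proof -
  have sym: "\<And>u v. u \<bullet> (S *v v) = v \<bullet> (S *v u)" using assms psd_def inner_sym by blast
  have nn: "\<And>u. 0 \<le> u \<bullet> (S *v u)" using assms psd_def by blast
  define a where "a = x \<bullet> (S *v x)"
  define b where "b = x \<bullet> (S *v y)"
  define c where "c = y \<bullet> (S *v y)"
  have q: "0 \<le> a + 2 * t * b + t^2 * c" for t
  proof -
    have "(x + t *\<^sub>R y) \<bullet> (S *v (x + t *\<^sub>R y)) = a + 2 * t * b + t^2 * c"
      unfolding a_def b_def c_def
      by (simp add: matrix_vector_mult_add_rdistrib matrix_vector_mult_scaleR algebra_simps
           inner_add_left inner_add_right sym[of y x] power2_eq_square)
    then show ?thesis using nn by metis
  qed
  show ?thesis
  proof (cases "c = 0")
    case True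
    have "b = 0"
    proof (rule ccontr)
      assume "b \<noteq> 0"
      have "0 \<le> a + 2 * (-(a+1)/(2*b)) * b" using q[of "-(a+1)/(2*b)"] True by simp
      then show False using \<open>b \<noteq> 0\<close> by (simp add: field_simps)
    qed
    then show ?thesis using True unfolding b_def c_def by simp
  next
    case False
    then have cp: "c > 0" using nn c_def by (metis less_eq_real_def)
    have "0 \<le> a + 2 * (-b/c) * b + (-b/c)^2 * c" using q by blast
    then have "0 \<le> a - b^2/c" using cp by (simp add: power2_eq_square field_simps)
    then have "b^2 \<le> a * c" using cp by (simp add: field_simps)
    then show ?thesis unfolding a_def b_def c_def .
  qed
qed


lemma loewner_refl: "loewner_ge X X" unfolding loewner_ge_def by simp

lemma loewner_inv:
  fixes P Q :: "real^'n^'n"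
  assumes pP: "pos_def P" and pQ: "pos_def Q" and ge: "loewner_ge P Q"
  shows "loewner_ge (matrix_inv Q) (matrix_inv P)"
proof -
  have invP: "invertible P" and invQ: "invertible Q" using pP pQ pd_invertible by auto
  have symQ: "transpose Q = Q" using pQ pos_def_def by blast
  have "y \<bullet> (matrix_inv P *v y) \<le> y \<bullet> (matrix_inv Q *v y)" for y
  proof -
    define u where "u = matrix_inv Q *v y"
    define w where "w = matrix_inv P *v y"
    have Qu: "Q *v u = y" unfolding u_def using matrix_inv_vec[OF invQ] by simp
    have Pw: "P *v w = y" unfolding w_def using matrix_inv_vec[OF invP] by simp
    have 1: "0 \<le> (w - u) \<bullet> (Q *v (w - u))" using pd_psd[OF pQ] psd_def by blast
    have uQw: "u \<bullet> (Q *v w) = w \<bullet> y" using inner_sym[OF symQ, of u w] Qu by simp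
    have 2: "(w - u) \<bullet> (Q *v (w - u)) = w \<bullet> (Q *v w) - 2 * (w \<bullet> y) + u \<bullet> y"
      using uQw Qu by (simp add: matrix_vector_mult_diff_distrib inner_diff_left inner_diff_right)
    have 3: "0 \<le> w \<bullet> ((P - Q) *v w)" using ge loewner_ge_def by blast
    then have "w \<bullet> (Q *v w) \<le> w \<bullet> y" using Pw
      by (simp add: matrix_vector_mult_diff_rdistrib inner_diff_right)
    then have "w \<bullet> y \<le> u \<bullet> y" using 1 2 by linarith
    then show ?thesis unfolding u_def w_def by (simp add: inner_commute)
  qed
  then show ?thesis unfolding loewner_ge_def
    by (simp add: matrix_vector_mult_diff_rdistrib inner_diff_right)
qed

lemma bounded_linear_mv: "bounded_linear (\<lambda>x. (P::real^'n^'m) *v x)"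
  using linear_conv_bounded_linear matrix_vector_mul_linear by blast

lemma rayleigh_max:
  fixes P :: "real^'n^'n"
  assumes pP: "pos_def P"
  shows "\<exists>\<mu> x0. x0 \<noteq> 0 \<and> P *v x0 = \<mu> *\<^sub>R x0 \<and> (\<forall>x. x \<bullet> (P *v x) \<le> \<mu> * (x \<bullet> x))"
proof -
  have sym: "transpose P = P" using pP pos_def_def by blast
  have cont: "continuous_on (sphere (0::real^'n) 1) (\<lambda>x. x \<bullet> (P *v x))"
    by (intro continuous_intros bounded_linear.continuous_on[OF bounded_linear_mv])
  have ne: "sphere (0::real^'n) 1 \<noteq> {}" by simp
  obtain x0 where x0s: "x0 \<in> sphere 0 1" and mx: "\<And>y. y \<in> sphere 0 1 \<Longrightarrow> y \<bullet> (P *v y) \<le> x0 \<bullet> (P *v x0)"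
    using continuous_attains_sup[OF compact_sphere ne cont] by blast
  define \<mu> where "\<mu> = x0 \<bullet> (P *v x0)"
  have nx0: "norm x0 = 1" using x0s by simp
  have x00: "x0 \<bullet> x0 = 1" using nx0 by (simp add: norm_eq_sqrt_inner)
  have bound: "x \<bullet> (P *v x) \<le> \<mu> * (x \<bullet> x)" for x
  proof (cases "x = 0")
    case True then show ?thesis by simp
  next
    case False
    define z where "z = (1 / norm x) *\<^sub>R x"
    have "z \<in> sphere 0 1" using False unfolding z_def by simp
    then have "z \<bullet> (P *v z) \<le> \<mu>" using mx \<mu>_def by blast
    moreover have "z \<bullet> (P *v z) = (x \<bullet> (P *v x)) / (x \<bullet> x)"
      unfolding z_def by (simp add: matrix_vector_mult_scaleR power2_norm_eq_inner[symmetric] power2_eq_square)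
    moreover have "x \<bullet> x > 0" using False by simp
    ultimately show ?thesis by (simp add: divide_le_eq mult.commute)
  qed
  define S where "S = \<mu> *\<^sub>R mat 1 - P"
  have Sv: "S *v v = \<mu> *\<^sub>R v - P *v v" for v
    unfolding S_def by (simp add: matrix_vector_mult_diff_rdistrib scaleR_matrix_vector_assoc[symmetric])
  have psdS: "psd S"
    unfolding psd_def
  proof
    show "transpose S = S" unfolding S_def by (simp add: transpose_diff transpose_scalar sym)
    show "\<forall>x. 0 \<le> x \<bullet> (S *v x)" using bound by (simp add: Sv inner_diff_right)
  qed
  have S0: "x0 \<bullet> (S *v x0) = 0" using x00 by (simp add: Sv inner_diff_right \<mu>_def)
  have "(S *v x0) \<bullet> (S *v x0) = 0"
  proof -
    have "((S *v x0) \<bullet> (S *v x0))^2 \<le> ((S *v x0) \<bullet> (S *v (S *v x0))) * (x0 \<bullet> (S *v x0))"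
      using cauchy_schwarz_psd[OF psdS] by blast
    then have "((S *v x0) \<bullet> (S *v x0))^2 \<le> 0" using S0 by simp
    then show ?thesis by simp
  qed
  then have "S *v x0 = 0" by simp
  then have "P *v x0 = \<mu> *\<^sub>R x0" using Sv[of x0] by simp
  moreover have "x0 \<noteq> 0" using nx0 by auto
  ultimately show ?thesis using bound by blast
qed

lemma eig_finite:
  fixes P :: "real^'n^'n"
  assumes sym: "transpose P = P"
  shows "finite {l. \<exists>v. v \<noteq> 0 \<and> P *v v = l *\<^sub>R v}"
proof -
  define E where "E = {l. \<exists>v. v \<noteq> 0 \<and> P *v v = l *\<^sub>R v}"
  define f where "f l = (SOME v. v \<noteq> 0 \<and> P *v v = l *\<^sub>R v)" for l
  have fE: "f l \<noteq> 0 \<and> P *v f l = l *\<^sub>R f l" if "l \<in> E" for l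
    using that unfolding E_def f_def by (metis (mono_tags, lifting) mem_Collect_eq someI_ex)
  have inj: "inj_on f E"
  proof (rule inj_onI)
    fix a b assume "a \<in> E" "b \<in> E" "f a = f b"
    then have "a *\<^sub>R f a = b *\<^sub>R f a" "f a \<noteq> 0" using fE by metis+
    then show "a = b" by simp
  qed
  have orth: "f a \<bullet> f b = 0" if "a \<in> E" "b \<in> E" "a \<noteq> b" for a b
  proof -
    have "a * (f a \<bullet> f b) = (P *v f a) \<bullet> f b" using fE[OF that(1)] by simp
    also have "\<dots> = f a \<bullet> (P *v f b)" using inner_sym[OF sym, of "f b" "f a"] by (simp add: inner_commute)
    also have "\<dots> = b * (f a \<bullet> f b)" using fE[OF that(2)] by simp
    finally show ?thesis using that(3) by simp
  qed
  have "pairwise orthogonal (f ` E)"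
    unfolding pairwise_def orthogonal_def using orth by blast
  moreover have "0 \<notin> f ` E" using fE by auto
  ultimately have "independent (f ` E)" by (rule pairwise_orthogonal_independent)
  then have "finite (f ` E)" by (rule finiteI_independent)
  then have "finite E" using finite_imageD inj by blast
  then show ?thesis unfolding E_def .
qed



lemma scaleR_mat_vec: "((t::real) *\<^sub>R mat 1) *v (y::real^'n) = t *\<^sub>R y"
  by (simp add: scaleR_matrix_vector_assoc[symmetric])

lemma pd_shift:
  fixes P :: "real^'n^'n"
  assumes pP: "pos_def P" and th0: "0 < \<theta>" and th1: "\<theta> < inverse (lambda1 P)"
  shows "pos_def (matrix_inv P - \<theta> *\<^sub>R mat 1)"
proof -
  have sym: "transpose P = P" using pP pos_def_def by blast
  have inv: "invertible P" using pP pd_invertible by blast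
  obtain \<mu> x0 where x0: "x0 \<noteq> 0" "P *v x0 = \<mu> *\<^sub>R x0" and bound: "\<And>x. x \<bullet> (P *v x) \<le> \<mu> * (x \<bullet> x)"
    using rayleigh_max[OF pP] by blast
  define E where "E = {l. \<exists>v. v \<noteq> 0 \<and> P *v v = l *\<^sub>R v}"
  have finE: "finite E" unfolding E_def using eig_finite[OF sym] .
  have muE: "\<mu> \<in> E" unfolding E_def using x0 by blast
  have le: "\<forall>l\<in>E. l \<le> \<mu>"
  proof
    fix l assume "l \<in> E"
    then obtain v where v: "v \<noteq> 0" "P *v v = l *\<^sub>R v" unfolding E_def by blast
    have "l * (v \<bullet> v) = v \<bullet> (P *v v)" using v by simp
    also have "\<dots> \<le> \<mu> * (v \<bullet> v)" by (rule bound)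
    finally show "l \<le> \<mu>" using v(1) by (simp add: mult_le_cancel_right)
  qed
  have lam: "lambda1 P = \<mu>" unfolding lambda1_def E_def[symmetric]
    by (rule Max_eqI[OF finE]) (use le muE in auto)
  have mupos: "\<mu> > 0"
  proof -
    have "0 < x0 \<bullet> (P *v x0)" using pP x0(1) pos_def_def by blast
    also have "\<dots> = \<mu> * (x0 \<bullet> x0)" using x0 by simp
    finally show ?thesis using x0(1) inner_ge_zero[of x0] by (auto simp: zero_less_mult_iff)
  qed
  have thmu: "\<theta> * \<mu> < 1" using th1 lam mupos by (simp add: field_simps)
  have key: "(P *v x) \<bullet> (P *v x) \<le> \<mu> * (x \<bullet> (P *v x))" for x
  proof -
    define w where "w = P *v x"
    define a where "a = x \<bullet> (P *v x)"
    have a0: "0 \<le> a" unfolding a_def using pd_psd[OF pP] psd_def by blast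
    have cs: "(x \<bullet> (P *v w))^2 \<le> a * (w \<bullet> (P *v w))"
      unfolding a_def using cauchy_schwarz_psd[OF pd_psd[OF pP]] by blast
    have "x \<bullet> (P *v w) = w \<bullet> w" using inner_sym[OF sym, of x w] unfolding w_def by simp
    moreover have "a * (w \<bullet> (P *v w)) \<le> a * (\<mu> * (w \<bullet> w))" using a0 bound mult_left_mono by blast
    ultimately have "(w \<bullet> w) * (w \<bullet> w) \<le> (a * \<mu>) * (w \<bullet> w)" using cs
      by (simp add: power2_eq_square mult.assoc)
    then have "w \<bullet> w \<le> a * \<mu> \<or> w \<bullet> w = 0"
      by (cases "w \<bullet> w > 0") (auto simp: mult_le_cancel_right)
    then have "w \<bullet> w \<le> \<mu> * a" using a0 mupos by (auto simp: mult.commute)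
    then show ?thesis unfolding w_def a_def .
  qed
  have "y \<bullet> ((matrix_inv P - \<theta> *\<^sub>R mat 1) *v y) > 0" if "y \<noteq> 0" for y
  proof -
    define x where "x = matrix_inv P *v y"
    have y: "y = P *v x" unfolding x_def using matrix_inv_vec[OF inv] by simp
    have "x \<noteq> 0" using y that by auto
    then have a: "x \<bullet> (P *v x) > 0" using pP pos_def_def by blast
    have "y \<bullet> ((matrix_inv P - \<theta> *\<^sub>R mat 1) *v y) = x \<bullet> (P *v x) - \<theta> * ((P *v x) \<bullet> (P *v x))"
      unfolding y using matrix_inv_vec(2)[OF inv]
      by (simp add: matrix_vector_mult_diff_rdistrib scaleR_mat_vec inner_diff_right inner_commute)
    also have "\<dots> \<ge> x \<bullet> (P *v x) - \<theta> * (\<mu> * (x \<bullet> (P *v x)))"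
      using key[of x] th0 by (simp add: mult_left_mono)
    finally have "y \<bullet> ((matrix_inv P - \<theta> *\<^sub>R mat 1) *v y) \<ge> (1 - \<theta> * \<mu>) * (x \<bullet> (P *v x))"
      by (simp add: algebra_simps)
    moreover have "(1 - \<theta> * \<mu>) * (x \<bullet> (P *v x)) > 0" using thmu a by simp
    ultimately show ?thesis by linarith
  qed
  moreover have "transpose (matrix_inv P - \<theta> *\<^sub>R mat 1) = matrix_inv P - \<theta> *\<^sub>R mat 1"
    by (simp add: transpose_diff transpose_scalar inv_sym[OF inv sym])
  ultimately show ?thesis unfolding pos_def_def by blast
qed



lemma psd_scal: "0 \<le> t \<Longrightarrow> psd ((t::real) *\<^sub>R (mat 1 :: real^'n^'n))"
  unfolding psd_def by (simp add: transpose_scalar scaleR_mat_vec)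

lemma swap3: "(a::real^'n^'n) + k - t = (a - t) + k" by (simp add: algebra_simps)

lemma stepR:
  fixes P K :: "real^'n^'n" and A :: "real^'n^'n" and BB :: "real^'n^'n"
  assumes pP: "pos_def P" and K: "psd K" and th0: "0 < \<theta>" and th1: "\<theta> < inverse (lambda1 P)"
    and BB: "pos_def BB"
  shows "pos_def (A ** matrix_inv (matrix_inv P + K - \<theta> *\<^sub>R mat 1) ** transpose A + BB)"
    "loewner_ge (A ** matrix_inv (matrix_inv P + K - \<theta> *\<^sub>R mat 1) ** transpose A + BB)
       (A ** matrix_inv (matrix_inv P + K) ** transpose A + BB)"
    "loewner_ge (A ** matrix_inv (matrix_inv P + K - \<theta> *\<^sub>R mat 1) ** transpose A + BB) BB"
proof -
  define M1 where "M1 = matrix_inv P + K - \<theta> *\<^sub>R mat 1"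
  define M2 where "M2 = matrix_inv P + K"
  have e1: "M1 = (matrix_inv P - \<theta> *\<^sub>R mat 1) + K" unfolding M1_def by (rule swap3)
  have pM1: "pos_def M1" unfolding e1 by (rule pd_add_psd[OF pd_shift[OF pP th0 th1] K])
  have pM2: "pos_def M2" unfolding M2_def by (rule pd_add_psd[OF pd_inv[OF pP] K])
  have e2: "M2 = M1 + \<theta> *\<^sub>R mat 1" unfolding M1_def M2_def by simp
  have ps1: "psd (\<theta> *\<^sub>R (mat 1 :: real^'n^'n))" by (intro psd_scal) (simp add: less_imp_le th0)
  have "loewner_ge M2 M1" unfolding e2 by (rule loewner_psd[OF ps1])
  then have g: "loewner_ge (matrix_inv M1) (matrix_inv M2)" by (rule loewner_inv[OF pM2 pM1])
  have ps: "psd (A ** matrix_inv M1 ** transpose A)" by (rule psd_congr[OF pd_psd[OF pd_inv[OF pM1]]])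
  have "pos_def (BB + A ** matrix_inv M1 ** transpose A)" by (rule pd_add_psd[OF BB ps])
  then show "pos_def (A ** matrix_inv (matrix_inv P + K - \<theta> *\<^sub>R mat 1) ** transpose A + BB)"
    unfolding M1_def[symmetric] by (simp only: add.commute)
  show "loewner_ge (A ** matrix_inv (matrix_inv P + K - \<theta> *\<^sub>R mat 1) ** transpose A + BB)
       (A ** matrix_inv (matrix_inv P + K) ** transpose A + BB)"
    unfolding M1_def[symmetric] unfolding M2_def[symmetric] M1_def[symmetric] by (rule loewner_add[OF loewner_congr[OF g]])
  have "loewner_ge (BB + A ** matrix_inv M1 ** transpose A) BB" by (rule loewner_psd[OF ps])
  then show "loewner_ge (A ** matrix_inv (matrix_inv P + K - \<theta> *\<^sub>R mat 1) ** transpose A + BB) BB"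
    unfolding M1_def[symmetric] by (simp only: add.commute)
qed

lemma step_r:
  fixes P Q K :: "real^'n^'n" and A :: "real^'n^'n" and BB :: "real^'n^'n"
  assumes pP: "pos_def P" and pQ: "pos_def Q" and ge: "loewner_ge P Q" and K: "psd K"
    and BB: "pos_def BB"
  shows "pos_def (A ** matrix_inv (matrix_inv P + K) ** transpose A + BB)"
    "loewner_ge (A ** matrix_inv (matrix_inv P + K) ** transpose A + BB)
       (A ** matrix_inv (matrix_inv Q + K) ** transpose A + BB)"
proof -
  have p1: "pos_def (matrix_inv P + K)" by (rule pd_add_psd[OF pd_inv[OF pP] K])
  have p2: "pos_def (matrix_inv Q + K)" by (rule pd_add_psd[OF pd_inv[OF pQ] K])
  have "loewner_ge (matrix_inv Q + K) (matrix_inv P + K)"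
    by (rule loewner_add[OF loewner_inv[OF pP pQ ge]])
  then have g: "loewner_ge (matrix_inv (matrix_inv P + K)) (matrix_inv (matrix_inv Q + K))"
    by (rule loewner_inv[OF p2 p1])
  have ps: "psd (A ** matrix_inv (matrix_inv P + K) ** transpose A)"
    by (rule psd_congr[OF pd_psd[OF pd_inv[OF p1]]])
  have "pos_def (BB + A ** matrix_inv (matrix_inv P + K) ** transpose A)" by (rule pd_add_psd[OF BB ps])
  then show "pos_def (A ** matrix_inv (matrix_inv P + K) ** transpose A + BB)"
    by (simp only: add.commute)
  show "loewner_ge (A ** matrix_inv (matrix_inv P + K) ** transpose A + BB)
       (A ** matrix_inv (matrix_inv Q + K) ** transpose A + BB)"
    by (rule loewner_add[OF loewner_congr[OF g]])
qed



theorem proposition1: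
  fixes A :: "real^'n^'n" and B :: "real^'m^'n" and C :: "real^'n^'p" and D :: "real^'p^'p"
    and c :: real and N :: nat
    and P Pd Pbar :: "nat \<Rightarrow> real^'n^'n"
  assumes reach: "reachable A B"
    and obs: "observable C A"
    and BB: "pos_def (B ** transpose B)"
    and DD: "pos_def (D ** transpose D)"
    and c_pos: "c > 0"
    and N_pos: "N > 0"
    and theta_ex: "\<And>Q::real^'n^'n. pos_def Q \<Longrightarrow>
          \<exists>!\<theta>. 0 < \<theta> \<and> \<theta> < inverse (lambda1 Q) \<and> gamma \<theta> Q = c"
    and P0: "pos_def (P 0)"
    and Pstep: "\<And>t. P (Suc t) = riccati_R c A B C D (P t)"
    and Pd_def: "\<And>k. Pd k = P (k * N)"
    and Pbar0: "Pbar 0 = B ** transpose B"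
    and Pbar_step: "\<And>t. Pbar (Suc t) = riccati A B C D (Pbar t)"
  shows "\<forall>q. (\<forall>t. t \<ge> q + 1 \<longrightarrow> loewner_ge (P t) (Pbar q))
           \<and> (\<forall>k. real_of_int (int k) \<ge> real_of_int \<lceil>real (q + 1) / real N\<rceil>
                  \<longrightarrow> loewner_ge (Pd k) (Pbar q))"
proof -
  define K where "K = transpose C ** matrix_inv (D ** transpose D) ** C"
  have Kpsd: "psd K"
    using psd_congr[OF pd_psd[OF pd_inv[OF DD]], of "transpose C"] unfolding K_def by simp
  have theta: "0 < theta_c c Q \<and> theta_c c Q < inverse (lambda1 Q)" if "pos_def Q" for Q :: "real^'n^'n"
  proof -
    have "0 < theta_c c Q \<and> theta_c c Q < inverse (lambda1 Q) \<and> gamma (theta_c c Q) Q = c"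
      unfolding theta_c_def by (rule theI'[OF theta_ex[OF that]])
    then show ?thesis by blast
  qed
  have PR: "P (Suc t) = A ** matrix_inv (matrix_inv (P t) + K - theta_c c (P t) *\<^sub>R mat 1) ** transpose A
            + B ** transpose B" for t
    unfolding Pstep riccati_R_def K_def ..
  have Pr: "Pbar (Suc t) = A ** matrix_inv (matrix_inv (Pbar t) + K) ** transpose A
            + B ** transpose B" for t
    unfolding Pbar_step riccati_def K_def ..
  have Ppd: "pos_def (P t)" for t
  proof (induction t)
    case 0 then show ?case by (rule P0)
  next
    case (Suc t)
    show ?case unfolding PR using theta[OF Suc] by (intro stepR(1)[OF Suc Kpsd _ _ BB]) auto
  qed
  have Pbpd: "pos_def (Pbar t)" for t
  proof (induction t)
    case 0 then show ?case unfolding Pbar0 by (rule BB)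
  next
    case (Suc t)
    show ?case unfolding Pr by (rule step_r(1)[OF Suc Suc loewner_refl Kpsd BB])
  qed
  have main: "\<forall>t. t \<ge> q + 1 \<longrightarrow> loewner_ge (P t) (Pbar q)" for q
  proof (induction q)
    case 0
    show ?case
    proof (intro allI impI)
      fix t :: nat assume "t \<ge> 0 + 1"
      then obtain s where t: "t = Suc s" by (cases t) auto
      show "loewner_ge (P t) (Pbar 0)" unfolding t PR Pbar0
        using theta[OF Ppd[of s]] by (intro stepR(3)[OF Ppd Kpsd _ _ BB]) auto
    qed
  next
    case (Suc q)
    show ?case
    proof (intro allI impI)
      fix t :: nat assume tq: "t \<ge> Suc q + 1"
      then obtain s where t: "t = Suc s" by (cases t) auto
      have sq: "s \<ge> q + 1" using tq t by simp
      have g1: "loewner_ge (P t) (A ** matrix_inv (matrix_inv (P s) + K) ** transpose A + B ** transpose B)"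
        unfolding t PR using theta[OF Ppd[of s]] by (intro stepR(2)[OF Ppd Kpsd _ _ BB]) auto
      have g2: "loewner_ge (A ** matrix_inv (matrix_inv (P s) + K) ** transpose A + B ** transpose B) (Pbar (Suc q))"
        unfolding Pr using Suc.IH sq by (intro step_r(2)[OF Ppd Pbpd _ Kpsd BB]) auto
      show "loewner_ge (P t) (Pbar (Suc q))" by (rule loewner_trans[OF g1 g2])
    qed
  qed
  show ?thesis
  proof (rule allI, rule conjI)
    fix q
    show "\<forall>t. t \<ge> q + 1 \<longrightarrow> loewner_ge (P t) (Pbar q)" by (rule main)
    show "\<forall>k. real_of_int (int k) \<ge> real_of_int \<lceil>real (q + 1) / real N\<rceil>
                  \<longrightarrow> loewner_ge (Pd k) (Pbar q)"
    proof (intro allI impI)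
      fix k assume h: "real_of_int (int k) \<ge> real_of_int \<lceil>real (q + 1) / real N\<rceil>"
      have "real (q + 1) / real N \<le> real k"
        using h by (metis le_of_int_ceiling of_int_of_nat_eq order_trans)
      then have "real (q + 1) \<le> real k * real N" using N_pos by (simp add: divide_le_eq)
      then have "q + 1 \<le> k * N" by (metis of_nat_le_iff of_nat_mult)
      then show "loewner_ge (Pd k) (Pbar q)" unfolding Pd_def using main by blast
    qed
  qed
qed


end
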